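(* Let $T\ge 3$ and consider the dynamic panel logit AR(1) model: binary outcomes $Y_0,Y_1,\dots,Y_T\in\{0,1\}$, regressors $X=(X_1,\dots,X_T)\in\mathbb{R}^{K\times T}$, fixed effect $A\in\mathbb{R}$, with, for $t\in\{1,\dots,T\}$, $$\Pr(Y_t=1\mid Y_0,\dots,Y_{t-1},X,A)=\frac{\exp(X_t'\beta_0+Y_{t-1}\gamma_0+A)}{1+\exp(X_t'\beta_0+Y_{t-1}\gamma_0+A)}.$$ For $y_0\in\{0,1\}$, $y=(y_1,\dots,y_T)\in\{0,1\}^T$, $x\in\mathbb{R}^{K\times T}$, $\beta\in\mathbb{R}^K$, $\gamma\in\mathbb{R}$ let $z_t=x_t'\beta+y_{t-1}\gamma$ and $z_{ts}=z_t-z_s$. For $t<s<r$ in $\{1,\dots,T\}$ define $$m^{(a)(t,s,r)}_{y_0}(y,x,\beta,\gamma)=\begin{cases}\exp(z_{ts})&(y_t,y_s,y_r)=(0,1,0),\\ \exp(z_{tr})&(y_t,y_s,y_r)=(0,1,1),\\ -1&(y_t,y_s)=(1,0),\\ \exp(z_{rs})-1&(y_t,y_s,y_r)=(1,1,0),\\0&\text{otherwise},\end{cases}$$ $$m^{(b)(t,s,r)}_{y_0}(y,x,\beta,\gamma)=\begin{cases}\exp(z_{sr})-1&(y_t,y_s,y_r)=(0,0,1),\\ -1&(y_t,y_s)=(0,1),\\ \exp(z_{rt})&(y_t,y_s,y_r)=(1,0,0),\\ \exp(z_{st})&(y_t,y_s,y_r)=(1,0,1),\\0&\text{otherwise}.\end{cases}$$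 Then for all $t<s<r$ in $\{1,\dots,T\}$, all $y_0\in\{0,1\}$, $x\in\mathbb{R}^{K\times T}$, $\alpha\in\mathbb{R}$ and all functions $w:\{0,1\}^{t-1}\to\mathbb{R}$, $$\mathbb{E}\big[w(Y_1,\dots,Y_{t-1})\,m^{(a)(t,s,r)}_{y_0}(Y,X,\beta_0,\gamma_0)\mid Y_0=y_0,X=x,A=\alpha\big]=0,$$ $$\mathbb{E}\big[w(Y_1,\dots,Y_{t-1})\,m^{(b)(t,s,r)}_{y_0}(Y,X,\beta_0,\gamma_0)\mid Y_0=y_0,X=x,A=\alpha\big]=0,$$ where $Y=(Y_1,\dots,Y_T)$.
   Context: The joint distribution of $(Y_0,X,A)$ is unrestricted; only the conditional law of $(Y_1,\dots,Y_T)$ given $(Y_0,X,A)$ is specified by the logit model. Note $z_t$ depends on $y_{t-1}$ (with $y_0$ the initial condition). For $t=1$, $w$ is a constant. *)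

theory Defs
  imports Complex_Main "HOL-Library.FuncSet"
begin

text \<open>Outcome histories y = (y_1,...,y_T) are extensional functions in
  PiE {1..T} (\<lambda>_. {0,1}); y_0 is passed separately. Regressors x t k
  (t = 1..T, k < K), coefficient beta k.\<close>

definition lagy :: "nat \<Rightarrow> (nat \<Rightarrow> nat) \<Rightarrow> nat \<Rightarrow> nat" where
  "lagy y0 y t = (if t = 1 then y0 else y (t - 1))"

definition zidx :: "nat \<Rightarrow> nat \<Rightarrow> (nat \<Rightarrow> nat) \<Rightarrow> (nat \<Rightarrow> nat \<Rightarrow> real)
    \<Rightarrow> (nat \<Rightarrow> real) \<Rightarrow> real \<Rightarrow> nat \<Rightarrow> real" where
  "zidx K y0 y x beta gamma t = (\<Sum>k<K. x t k * beta k) + real (lagy y0 y t) * gamma"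

definition logistic :: "real \<Rightarrow> real" where
  "logistic u = exp u / (1 + exp u)"

definition cprob :: "nat \<Rightarrow> nat \<Rightarrow> nat \<Rightarrow> (nat \<Rightarrow> nat \<Rightarrow> real) \<Rightarrow> (nat \<Rightarrow> real)
    \<Rightarrow> real \<Rightarrow> real \<Rightarrow> (nat \<Rightarrow> nat) \<Rightarrow> real" where
  "cprob K T y0 x beta0 gamma0 alpha y =
     (\<Prod>t\<in>{1..T}. let p = logistic (zidx K y0 y x beta0 gamma0 t + alpha)
                   in if y t = 1 then p else 1 - p)"

definition m_a :: "nat \<Rightarrow> nat \<Rightarrow> nat \<Rightarrow> nat \<Rightarrow> nat \<Rightarrow> (nat \<Rightarrow> nat)
    \<Rightarrow> (nat \<Rightarrow> nat \<Rightarrow> real) \<Rightarrow> (nat \<Rightarrow> real) \<Rightarrow> real \<Rightarrow> real" where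
  "m_a K t s r y0 y x beta gamma =
     (let z = zidx K y0 y x beta gamma in
      if (y t, y s, y r) = (0, 1, 0) then exp (z t - z s)
      else if (y t, y s, y r) = (0, 1, 1) then exp (z t - z r)
      else if (y t, y s) = (1, 0) then -1
      else if (y t, y s, y r) = (1, 1, 0) then exp (z r - z s) - 1
      else 0)"

definition m_b :: "nat \<Rightarrow> nat \<Rightarrow> nat \<Rightarrow> nat \<Rightarrow> nat \<Rightarrow> (nat \<Rightarrow> nat)
    \<Rightarrow> (nat \<Rightarrow> nat \<Rightarrow> real) \<Rightarrow> (nat \<Rightarrow> real) \<Rightarrow> real \<Rightarrow> real" where
  "m_b K t s r y0 y x beta gamma =
     (let z = zidx K y0 y x beta gamma in
      if (y t, y s, y r) = (0, 0, 1) then exp (z s - z r) - 1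
      else if (y t, y s) = (0, 1) then -1
      else if (y t, y s, y r) = (1, 0, 0) then exp (z r - z t)
      else if (y t, y s, y r) = (1, 0, 1) then exp (z s - z t)
      else 0)"

end

theory Submission
  imports Defs
begin


definition seg :: "nat \<Rightarrow> (nat \<Rightarrow> nat) \<Rightarrow> (nat \<Rightarrow> nat) \<Rightarrow> nat \<Rightarrow> nat" where
  "seg m y v = (\<lambda>i. if i \<le> m then y i else v i)"

definition qq :: "real \<Rightarrow> nat \<Rightarrow> real" where
  "qq z b = (if b = 1 then logistic z else 1 - logistic z)"

lemma qq_sum: "(\<Sum>b\<in>{0::nat,1}. qq z b) = 1"
  by (simp add: qq_def)

lemma qq_sum': "(\<Sum>b\<in>{0::nat, Suc 0}. qq z b) = 1"
  by (simp add: qq_def)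

lemma seg_le[simp]: "i \<le> m \<Longrightarrow> seg m y v i = y i"
  by (simp add: seg_def)

lemma seg_gt[simp]: "m < i \<Longrightarrow> seg m y v i = v i"
  by (simp add: seg_def)

locale chain = fixes K y0 :: nat and x :: "nat \<Rightarrow> nat \<Rightarrow> real" and beta0 :: "nat \<Rightarrow> real"
  and gamma0 alpha :: real
begin

definition Z :: "(nat \<Rightarrow> nat) \<Rightarrow> nat \<Rightarrow> real" where
  "Z y u = zidx K y0 y x beta0 gamma0 u"

definition CE :: "nat \<Rightarrow> nat \<Rightarrow> ((nat \<Rightarrow> nat) \<Rightarrow> real) \<Rightarrow> (nat \<Rightarrow> nat) \<Rightarrow> real" where
  "CE m n F y = (\<Sum>v\<in>PiE {Suc m..n} (\<lambda>_. {0::nat,1}).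
      (\<Prod>u\<in>{Suc m..n}. qq (Z (seg m y v) u + alpha) (seg m y v u)) * F (seg m y v))"

lemma Z_upd: "0 < u \<Longrightarrow> u \<le> N \<Longrightarrow> Z (f(N := b)) u = Z f u"
  by (simp add: Z_def zidx_def lagy_def) arith

lemma Z_seg: "u \<le> Suc m \<Longrightarrow> Z (seg m f v) u = Z f u"
  by (simp add: Z_def zidx_def lagy_def)

lemma zidx_seg: "u \<le> Suc m \<Longrightarrow> zidx K y0 (seg m f v) x beta0 gamma0 u = zidx K y0 f x beta0 gamma0 u"
  using Z_seg unfolding Z_def .

lemma Z_seg_markov: "m < u \<Longrightarrow> y m = y' m \<Longrightarrow> Z (seg m y v) u = Z (seg m y' v) u"
proof -
  assume a: "m < u" "y m = y' m"
  have "u - 1 \<le> m \<Longrightarrow> u - 1 = m" using a by linarith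
  then show ?thesis using a by (auto simp add: Z_def zidx_def lagy_def seg_def)
qed

lemma CE_step:
  assumes "m \<le> n"
  shows "CE m (Suc n) F y = CE m n (\<lambda>y'. \<Sum>b\<in>{0::nat,1}. qq (Z (y'(Suc n := b)) (Suc n) + alpha) b * F (y'(Suc n := b))) y"
proof -
  let ?S = "{Suc m..n}"
  have ins: "{Suc m..Suc n} = insert (Suc n) ?S" using assms by auto
  have nin: "Suc n \<notin> ?S" by auto
  define h where "h v = (\<Prod>u\<in>{Suc m..Suc n}. qq (Z (seg m y v) u + alpha) (seg m y v u)) * F (seg m y v)" for v
  have "CE m (Suc n) F y = (\<Sum>v\<in>PiE (insert (Suc n) ?S) (\<lambda>_. {0::nat,1}). h v)"
    unfolding CE_def h_def ins ..
  also have "\<dots> = (\<Sum>p\<in>{0::nat,1} \<times> PiE ?S (\<lambda>_. {0::nat,1}). h ((\<lambda>(b, g). g(Suc n := b)) p))"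
    unfolding PiE_insert_eq
    by (subst sum.reindex) (auto intro: inj_combinator[OF nin, of "\<lambda>_. {0::nat,1}", simplified])
  also have "\<dots> = (\<Sum>g\<in>PiE ?S (\<lambda>_. {0::nat,1}). \<Sum>b\<in>{0::nat,1}. h (g(Suc n := b)))"
    by (subst sum.swap) (simp add: sum.cartesian_product case_prod_beta)
  also have "\<dots> = CE m n (\<lambda>y'. \<Sum>b\<in>{0::nat,1}. qq (Z (y'(Suc n := b)) (Suc n) + alpha) b * F (y'(Suc n := b))) y"
    unfolding CE_def
  proof (rule sum.cong[OF refl])
    fix g assume g: "g \<in> PiE ?S (\<lambda>_. {0::nat,1})"
    have sg: "seg m y (g(Suc n := b)) = (seg m y g)(Suc n := b)" for b
      using assms by (auto simp: seg_def fun_eq_iff)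
    have pr: "(\<Prod>u\<in>?S. qq (Z ((seg m y g)(Suc n := b)) u + alpha) (((seg m y g)(Suc n := b)) u))
        = (\<Prod>u\<in>?S. qq (Z (seg m y g) u + alpha) (seg m y g u))" for b
      by (rule prod.cong[OF refl]) (auto simp: Z_upd)
    show "(\<Sum>b\<in>{0::nat,1}. h (g(Suc n := b))) =
      (\<Prod>u\<in>?S. qq (Z (seg m y g) u + alpha) (seg m y g u)) *
      (\<Sum>b\<in>{0::nat,1}. qq (Z ((seg m y g)(Suc n := b)) (Suc n) + alpha) b * F ((seg m y g)(Suc n := b)))"
      unfolding h_def sg ins using pr nin
      by (simp add: prod.insert sum_distrib_left algebra_simps del: insert_iff)
  qed
  finally show ?thesis .
qed


lemma CE_cong:
  assumes "\<And>v. v \<in> PiE {Suc m..n} (\<lambda>_. {0::nat,1}) \<Longrightarrow> F (seg m y v) = G (seg m y v)"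
  shows "CE m n F y = CE m n G y"
  unfolding CE_def by (rule sum.cong[OF refl]) (simp add: assms)

lemma CE_refl: "CE m m F y = F (seg m y (\<lambda>_. undefined))"
  by (simp add: CE_def)

lemma CE_const: "m \<le> n \<Longrightarrow> CE m n (\<lambda>_. c) y = c"
proof (induction n rule: dec_induct)
  case base then show ?case by (simp add: CE_refl)
next
  case (step n)
  have e: "(\<lambda>y'. \<Sum>b\<in>{0::nat,1}. qq (Z (y'(Suc n := b)) (Suc n) + alpha) b * c) = (\<lambda>_. c)"
    by (simp add: Z_upd qq_def algebra_simps)
  have "CE m (Suc n) (\<lambda>_. c) y = CE m n (\<lambda>y'. \<Sum>b\<in>{0::nat,1}. qq (Z (y'(Suc n := b)) (Suc n) + alpha) b * c) y"
    by (rule CE_step) (use step in simp)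
  also have "\<dots> = c" unfolding e by (rule step.IH)
  finally show ?case .
qed

lemma CE_add: "CE m n (\<lambda>y. F y + G y) y = CE m n F y + CE m n G y"
  unfolding CE_def by (simp add: sum.distrib algebra_simps)

lemma CE_pull:
  assumes "\<And>v. A (seg m y v) = a"
  shows "CE m n (\<lambda>y. A y * F y) y = a * CE m n F y"
  unfolding CE_def by (simp add: assms sum_distrib_left algebra_simps)

lemma CE_dep:
  assumes "m \<le> n" "\<And>v. A (seg m y v) = A y"
  shows "CE m n A y = A y"
proof -
  have "CE m n A y = CE m n (\<lambda>y'. A y' * 1) y" by simp
  also have "\<dots> = A y * CE m n (\<lambda>_. 1) y" by (rule CE_pull) (simp add: assms)
  finally show ?thesis using CE_const[OF assms(1)] by simp
qed

lemma CE_markov: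
  assumes "y m = y' m" "\<And>v. F (seg m y v) = F (seg m y' v)"
  shows "CE m n F y = CE m n F y'"
proof -
  have sv: "seg m y v u = seg m y' v u" if "m < u" for v u using that by simp
  show ?thesis unfolding CE_def
    by (rule sum.cong[OF refl], rule arg_cong2[where f = "(*)"], rule prod.cong[OF refl])
       (auto simp: assms Z_seg_markov[where y=y and y'=y', OF _ assms(1)] sv)
qed

lemma CE_tower:
  assumes "m \<le> k" "k \<le> n"
  shows "CE m n F y = CE m k (CE k n F) y"
  using assms(2)
proof (induction n arbitrary: F rule: dec_induct)
  case base
  show ?case
  proof (rule CE_cong)
    fix v assume v: "v \<in> PiE {Suc m..k} (\<lambda>_. {0::nat,1})"
    have "seg k (seg m y v) (\<lambda>_. undefined) = seg m y v"
      using v assms(1) by (auto simp: seg_def fun_eq_iff PiE_def extensional_def)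
    then show "F (seg m y v) = CE k k F (seg m y v)" by (simp add: CE_refl)
  qed
next
  case (step n)
  have "CE m (Suc n) F y = CE m n (\<lambda>y'. \<Sum>b\<in>{0::nat,1}. qq (Z (y'(Suc n := b)) (Suc n) + alpha) b * F (y'(Suc n := b))) y"
    using step assms by (simp add: CE_step del: insert_iff)
  also have "\<dots> = CE m k (CE k n (\<lambda>y'. \<Sum>b\<in>{0::nat,1}. qq (Z (y'(Suc n := b)) (Suc n) + alpha) b * F (y'(Suc n := b)))) y"
    by (rule step.IH)
  also have "\<dots> = CE m k (CE k (Suc n) F) y"
  proof -
    have "CE k (Suc n) F = CE k n (\<lambda>y'. \<Sum>b\<in>{0::nat,1}. qq (Z (y'(Suc n := b)) (Suc n) + alpha) b * F (y'(Suc n := b)))"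
      by (rule ext, rule CE_step) (use step in simp)
    then show ?thesis by simp
  qed
  finally show ?case .
qed


lemma CE_step':
  assumes "m < n"
  shows "CE m n F y = CE m (n - 1) (\<lambda>y'. \<Sum>b\<in>{0::nat,1}. qq (Z (y'(n := b)) n + alpha) b * F (y'(n := b))) y"
proof -
  obtain n' where n: "n = Suc n'" using assms by (cases n) auto
  show ?thesis unfolding n using assms n by (simp add: CE_step del: insert_iff)
qed

lemma core:
  assumes t1: "1 \<le> t" and ts: "t < s" and sr: "s < r" and rT: "r \<le> T"
  and Mdep: "\<And>y v. M (seg r y v) = M y"
  and gm: "\<And>y y' v. y s = y' s \<Longrightarrow> g (seg s y v) = g (seg s y' v)"
  and stepR: "\<And>y. (\<Sum>b\<in>{0::nat,1}. qq (Z (y(r:=b)) r + alpha) b * M (y(r:=b))) = PA y * g y + PB y"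
  and PAc: "\<And>y. y s \<noteq> c \<Longrightarrow> PA y = 0"
  and PAdep: "\<And>y v. PA (seg s y v) = PA y"
  and PBdep: "\<And>y v. PB (seg s y v) = PB y"
  and stepS: "\<And>y G. (\<Sum>b\<in>{0::nat,1}. qq (Z (y(s:=b)) s + alpha) b * (PA (y(s:=b)) * G + PB (y(s:=b)))) = H G y"
  and Hdep: "\<And>G y v. H G (seg t y v) = H G y"
  and stepT: "\<And>G y. (\<Sum>b\<in>{0::nat,1}. qq (Z (y(t:=b)) t + alpha) b * H G (y(t:=b))) = 0"
  shows "CE (t-1) T M y = 0"
proof -
  have e1: "CE r T M = M" by (rule ext, rule CE_dep) (use rT Mdep in auto)
  have "CE (t-1) T M y = CE (t-1) r (CE r T M) y" by (rule CE_tower) (use assms in auto)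
  also have "\<dots> = CE (t-1) r M y" unfolding e1 ..
  also have "\<dots> = CE (t-1) (r-1) (\<lambda>y. PA y * g y + PB y) y"
    by (subst CE_step') (use assms in \<open>auto simp: stepR\<close>)
  also have "\<dots> = CE (t-1) s (CE s (r-1) (\<lambda>y. PA y * g y + PB y)) y"
    by (rule CE_tower) (use assms in auto)
  also have "\<dots> = CE (t-1) s (\<lambda>y. PA y * CE s (r-1) g (\<lambda>_. c) + PB y) y"
  proof -
    have "CE s (r-1) (\<lambda>y. PA y * g y + PB y) y' = PA y' * CE s (r-1) g (\<lambda>_. c) + PB y'" for y'
    proof -
      have "CE s (r-1) (\<lambda>y. PA y * g y + PB y) y' = PA y' * CE s (r-1) g y' + PB y'"
        unfolding CE_add
        by (subst CE_pull[where a="PA y'"], simp add: PAdep, subst CE_dep) (use sr PBdep in auto)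
      also have "PA y' * CE s (r-1) g y' = PA y' * CE s (r-1) g (\<lambda>_. c)"
      proof (cases "y' s = c")
        case True
        then show ?thesis by (subst CE_markov[where y'="\<lambda>_. c"]) (auto intro: gm)
      next
        case False
        then show ?thesis by (simp add: PAc)
      qed
      finally show ?thesis .
    qed
    then have "CE s (r-1) (\<lambda>y. PA y * g y + PB y) = (\<lambda>y'. PA y' * CE s (r-1) g (\<lambda>_. c) + PB y')"
      by (simp add: fun_eq_iff)
    then show ?thesis by simp
  qed
  also have "\<dots> = CE (t-1) (s-1) (H (CE s (r-1) g (\<lambda>_. c))) y"
    by (subst CE_step') (use assms in \<open>auto simp: stepS\<close>)
  also have "\<dots> = CE (t-1) t (CE t (s-1) (H (CE s (r-1) g (\<lambda>_. c)))) y"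
    by (rule CE_tower) (use assms in auto)
  also have "\<dots> = CE (t-1) t (H (CE s (r-1) g (\<lambda>_. c))) y"
  proof -
    have "CE t (s-1) (H (CE s (r-1) g (\<lambda>_. c))) = H (CE s (r-1) g (\<lambda>_. c))"
      by (rule ext, rule CE_dep) (use ts Hdep in auto)
    then show ?thesis by simp
  qed
  also have "\<dots> = CE (t-1) (t-1) (\<lambda>_. 0) y"
    by (subst CE_step') (use assms in \<open>auto simp: stepT\<close>)
  also have "\<dots> = 0" by (rule CE_const) simp
  finally show ?thesis .
qed


definition P0a where "P0a t s y = (if y s = 1 then (if y t = 0 then exp (Z y t - Z y s) * (1 + exp (Z y s + alpha))
         else if y t = 1 then - (exp (- Z y s - alpha) * (1 + exp (Z y s + alpha))) else 0) else 0)"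
definition P1a where "P1a t s y = (if y t = 1 then (if y s = 1 then exp (- Z y s - alpha) else if y s = 0 then -1 else 0) else 0)"
definition Ha where "Ha t G y = G * (if y t = 0 then exp (Z y t + alpha) else if y t = 1 then -1 else (0::real))"

definition P0b where "P0b t s y = (if y s = 0 then (if y t = 0 then 1 + exp (Z y s + alpha)
         else if y t = 1 then - (exp (- Z y t - alpha) * (1 + exp (Z y s + alpha))) else 0) else 0)"
definition P1b where "P1b t s y = (if y t = 0 then (if y s = 0 \<or> y s = 1 then -1 else 0)
         else if y t = 1 then (if y s = 0 then exp (- Z y t - alpha) * (1 + exp (Z y s + alpha)) else 0) else 0)"
definition Hb where "Hb t G y = (G - 1) * (if y t = 0 then 1 else if y t = 1 then - exp (- Z y t - alpha) else (0::real))"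

lemma ne0: "0 < (u::real) \<Longrightarrow> u \<noteq> 0" by simp

lemma stepR_a:
  assumes "0 < t" "t < s" "s < r"
  shows "(\<Sum>b\<in>{0::nat,1}. qq (Z (y(r:=b)) r + alpha) b * m_a K t s r y0 (y(r:=b)) x beta0 gamma0)
    = P0a t s y * (1 / (1 + exp (Z y r + alpha))) + P1a t s y"
proof -
  have z: "zidx K y0 (y(r:=b)) x beta0 gamma0 u = Z y u" if "0 < u" "u \<le> r" for u b
    using Z_upd[OF that] by (simp add: Z_def)
  have z2: "Z (y(r:=b)) r = Z y r" for b using Z_upd[of r r] assms by simp
  have pa: "exp (Z y r + alpha) > 0" by simp
  show ?thesis
    using assms
    by (cases "y t = 0"; cases "y t = 1"; cases "y s = 0"; cases "y s = 1")
       (simp_all add: P0a_def P1a_def m_a_def Let_def qq_def logistic_def z z2 exp_diff exp_add exp_minus field_simps ne0 add_pos_pos mult_pos_pos)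
qed


lemma stepR_b:
  assumes "0 < t" "t < s" "s < r"
  shows "(\<Sum>b\<in>{0::nat,1}. qq (Z (y(r:=b)) r + alpha) b * m_b K t s r y0 (y(r:=b)) x beta0 gamma0)
    = P0b t s y * (1 / (1 + exp (Z y r + alpha))) + P1b t s y"
proof -
  have z: "zidx K y0 (y(r:=b)) x beta0 gamma0 u = Z y u" if "0 < u" "u \<le> r" for u b
    using Z_upd[OF that] by (simp add: Z_def)
  have z2: "Z (y(r:=b)) r = Z y r" for b using Z_upd[of r r] assms by simp
  show ?thesis
    using assms
    by (cases "y t = 0"; cases "y t = 1"; cases "y s = 0"; cases "y s = 1")
       (simp_all add: P0b_def P1b_def m_b_def Let_def qq_def logistic_def z z2 exp_diff exp_add exp_minus field_simps ne0 add_pos_pos mult_pos_pos)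
qed

lemma stepS_a:
  assumes "0 < t" "t < s"
  shows "(\<Sum>b\<in>{0::nat,1}. qq (Z (y(s:=b)) s + alpha) b * (P0a t s (y(s:=b)) * G + P1a t s (y(s:=b)))) = Ha t G y"
proof -
  have z: "Z (y(s:=b)) u = Z y u" if "0 < u" "u \<le> s" for u b using Z_upd[OF that] by simp
  show ?thesis
    using assms
    by (cases "y t = 0"; cases "y t = 1")
       (simp_all add: P0a_def P1a_def Ha_def qq_def logistic_def z exp_diff exp_add exp_minus field_simps ne0 add_pos_pos mult_pos_pos)
qed

lemma stepS_b:
  assumes "0 < t" "t < s"
  shows "(\<Sum>b\<in>{0::nat,1}. qq (Z (y(s:=b)) s + alpha) b * (P0b t s (y(s:=b)) * G + P1b t s (y(s:=b)))) = Hb t G y"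
proof -
  have z: "Z (y(s:=b)) u = Z y u" if "0 < u" "u \<le> s" for u b using Z_upd[OF that] by simp
  show ?thesis
    using assms
    by (cases "y t = 0"; cases "y t = 1")
       (simp_all add: P0b_def P1b_def Hb_def qq_def logistic_def z exp_diff exp_add exp_minus field_simps ne0 add_pos_pos mult_pos_pos)
qed

lemma stepT_a:
  assumes "0 < t"
  shows "(\<Sum>b\<in>{0::nat,1}. qq (Z (y(t:=b)) t + alpha) b * Ha t G (y(t:=b))) = 0"
proof -
  have z: "Z (y(t:=b)) t = Z y t" for b using Z_upd[of t t] assms by simp
  show ?thesis
    by (simp add: Ha_def qq_def logistic_def z exp_diff exp_add exp_minus field_simps ne0 add_pos_pos mult_pos_pos)
qed

lemma stepT_b:
  assumes "0 < t"
  shows "(\<Sum>b\<in>{0::nat,1}. qq (Z (y(t:=b)) t + alpha) b * Hb t G (y(t:=b))) = 0"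
proof -
  have z: "Z (y(t:=b)) t = Z y t" for b using Z_upd[of t t] assms by simp
  show ?thesis
    by (simp add: Hb_def qq_def logistic_def z exp_diff exp_add exp_minus field_simps ne0 add_pos_pos mult_pos_pos)
qed


end


context chain begin
lemma main_a:
  assumes "1 \<le> t" "t < s" "s < r" "r \<le> T"
  shows "CE (t-1) T (\<lambda>y. m_a K t s r y0 y x beta0 gamma0) y = 0"
proof (rule core[where g = "\<lambda>y. 1 / (1 + exp (Z y r + alpha))" and PA = "P0a t s" and PB = "P1a t s" and H = "Ha t" and c = 1])
  show "\<And>y v. m_a K t s r y0 (seg r y v) x beta0 gamma0 = m_a K t s r y0 y x beta0 gamma0"
    using assms by (simp add: m_a_def zidx_seg Let_def)
  show "1 / (1 + exp (Z (seg s y v) r + alpha)) = 1 / (1 + exp (Z (seg s y' v) r + alpha))"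
    if "y s = y' s" for y y' v
    using Z_seg_markov[of s r y y' v] that assms by simp
  show "\<And>y. (\<Sum>b\<in>{0::nat,1}. qq (Z (y(r:=b)) r + alpha) b * m_a K t s r y0 (y(r:=b)) x beta0 gamma0) = P0a t s y * (1 / (1 + exp (Z y r + alpha))) + P1a t s y"
    by (rule stepR_a) (use assms in auto)
  show "\<And>y. y s \<noteq> 1 \<Longrightarrow> P0a t s y = 0" by (simp add: P0a_def)
  show "\<And>y v. P0a t s (seg s y v) = P0a t s y" using assms by (simp add: P0a_def Z_seg)
  show "\<And>y v. P1a t s (seg s y v) = P1a t s y" using assms by (simp add: P1a_def Z_seg)
  show "\<And>y G. (\<Sum>b\<in>{0::nat,1}. qq (Z (y(s:=b)) s + alpha) b * (P0a t s (y(s:=b)) * G + P1a t s (y(s:=b)))) = Ha t G y"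
    by (rule stepS_a) (use assms in auto)
  show "\<And>G y v. Ha t G (seg t y v) = Ha t G y" using assms by (simp add: Ha_def Z_seg)
  show "\<And>G y. (\<Sum>b\<in>{0::nat,1}. qq (Z (y(t:=b)) t + alpha) b * Ha t G (y(t:=b))) = 0"
    by (rule stepT_a) (use assms in auto)
qed (use assms in auto)

lemma main_b:
  assumes "1 \<le> t" "t < s" "s < r" "r \<le> T"
  shows "CE (t-1) T (\<lambda>y. m_b K t s r y0 y x beta0 gamma0) y = 0"
proof (rule core[where g = "\<lambda>y. 1 / (1 + exp (Z y r + alpha))" and PA = "P0b t s" and PB = "P1b t s" and H = "Hb t" and c = 0])
  show "\<And>y v. m_b K t s r y0 (seg r y v) x beta0 gamma0 = m_b K t s r y0 y x beta0 gamma0"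
    using assms by (simp add: m_b_def zidx_seg Let_def)
  show "1 / (1 + exp (Z (seg s y v) r + alpha)) = 1 / (1 + exp (Z (seg s y' v) r + alpha))"
    if "y s = y' s" for y y' v
    using Z_seg_markov[of s r y y' v] that assms by simp
  show "\<And>y. (\<Sum>b\<in>{0::nat,1}. qq (Z (y(r:=b)) r + alpha) b * m_b K t s r y0 (y(r:=b)) x beta0 gamma0) = P0b t s y * (1 / (1 + exp (Z y r + alpha))) + P1b t s y"
    by (rule stepR_b) (use assms in auto)
  show "\<And>y. y s \<noteq> 0 \<Longrightarrow> P0b t s y = 0" by (simp add: P0b_def)
  show "\<And>y v. P0b t s (seg s y v) = P0b t s y" using assms by (simp add: P0b_def Z_seg)
  show "\<And>y v. P1b t s (seg s y v) = P1b t s y" using assms by (simp add: P1b_def Z_seg)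
  show "\<And>y G. (\<Sum>b\<in>{0::nat,1}. qq (Z (y(s:=b)) s + alpha) b * (P0b t s (y(s:=b)) * G + P1b t s (y(s:=b)))) = Hb t G y"
    by (rule stepS_b) (use assms in auto)
  show "\<And>G y v. Hb t G (seg t y v) = Hb t G y" using assms by (simp add: Hb_def Z_seg)
  show "\<And>G y. (\<Sum>b\<in>{0::nat,1}. qq (Z (y(t:=b)) t + alpha) b * Hb t G (y(t:=b))) = 0"
    by (rule stepT_b) (use assms in auto)
qed (use assms in auto)

lemma full:
  assumes "1 \<le> t" "t \<le> T" "\<And>y. CE (t-1) T M y = 0"
  shows "(\<Sum>y\<in>PiE {1..T} (\<lambda>_. {0, 1}).
            cprob K T y0 x beta0 gamma0 alpha y * (w (restrict y {1..t - 1}) * M y)) = 0"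
proof -
  let ?F = "\<lambda>y. w (restrict y {1..t - 1}) * M y"
  have "(\<Sum>y\<in>PiE {1..T} (\<lambda>_. {0, 1}). cprob K T y0 x beta0 gamma0 alpha y * ?F y)
      = CE 0 T ?F (\<lambda>_. undefined)"
    unfolding CE_def
  proof (rule sum.cong)
    show "PiE {1..T} (\<lambda>_. {0::nat, 1}) = PiE {Suc 0..T} (\<lambda>_. {0, 1})" by simp
    fix v assume v: "v \<in> PiE {Suc 0..T} (\<lambda>_. {0::nat, 1})"
    have sv: "seg 0 (\<lambda>_. undefined) v = v"
      using v by (auto simp: seg_def fun_eq_iff PiE_def extensional_def)
    show "cprob K T y0 x beta0 gamma0 alpha v * ?F v =
      (\<Prod>u\<in>{Suc 0..T}. qq (Z (seg 0 (\<lambda>_. undefined) v) u + alpha) (seg 0 (\<lambda>_. undefined) v u)) * ?F (seg 0 (\<lambda>_. undefined) v)"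
      unfolding sv by (simp add: cprob_def qq_def Z_def Let_def)
  qed
  also have "\<dots> = CE 0 (t-1) (CE (t-1) T ?F) (\<lambda>_. undefined)"
    by (rule CE_tower) (use assms in auto)
  also have "\<dots> = CE 0 (t-1) (\<lambda>_. 0) (\<lambda>_. undefined)"
  proof -
    have "CE (t-1) T ?F y' = 0" for y'
    proof -
      have "CE (t-1) T ?F y' = w (restrict y' {1..t - 1}) * CE (t-1) T M y'"
        by (rule CE_pull, rule arg_cong[where f = w]) (auto simp: restrict_def fun_eq_iff)
      then show ?thesis using assms(3) by simp
    qed
    then have "CE (t-1) T ?F = (\<lambda>_. 0)" by (simp add: fun_eq_iff)
    then show ?thesis by simp
  qed
  also have "\<dots> = 0" by (rule CE_const) simp
  finally show ?thesis .
qed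

end

theorem proposition1:
  fixes K T t s r y0 :: nat
    and x :: "nat \<Rightarrow> nat \<Rightarrow> real" and beta0 :: "nat \<Rightarrow> real"
    and gamma0 alpha :: real
    and w :: "(nat \<Rightarrow> nat) \<Rightarrow> real"
  assumes "T \<ge> 3" and "1 \<le> t" and "t < s" and "s < r" and "r \<le> T"
    and "y0 \<in> {0, 1}"
  shows "(\<Sum>y\<in>PiE {1..T} (\<lambda>_. {0, 1}).
            cprob K T y0 x beta0 gamma0 alpha y *
            (w (restrict y {1..t - 1}) * m_a K t s r y0 y x beta0 gamma0)) = 0
       \<and> (\<Sum>y\<in>PiE {1..T} (\<lambda>_. {0, 1}).
            cprob K T y0 x beta0 gamma0 alpha y *
            (w (restrict y {1..t - 1}) * m_b K t s r y0 y x beta0 gamma0)) = 0"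
proof
  show "(\<Sum>y\<in>PiE {1..T} (\<lambda>_. {0, 1}).
            cprob K T y0 x beta0 gamma0 alpha y *
            (w (restrict y {1..t - 1}) * m_a K t s r y0 y x beta0 gamma0)) = 0"
    by (rule chain.full[of t T K y0 x beta0 gamma0 alpha], use assms in simp, use assms in simp,
        rule chain.main_a) (use assms in simp_all)
  show "(\<Sum>y\<in>PiE {1..T} (\<lambda>_. {0, 1}).
            cprob K T y0 x beta0 gamma0 alpha y *
            (w (restrict y {1..t - 1}) * m_b K t s r y0 y x beta0 gamma0)) = 0"
    by (rule chain.full[of t T K y0 x beta0 gamma0 alpha], use assms in simp, use assms in simp,
        rule chain.main_b) (use assms in simp_all)
qed

end
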